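(* Let $f^*:[0,1]\to\mathbb{R}$ be $L$-Lipschitz, let $\mu_i=f^*(i/n)$ for $1\le i\le n$, let $\pi^*$ be a permutation of $[n]=\{1,\dots,n\}$, $\sigma_*>0$, and suppose $$y_i=\mu_{\pi^*(i)}+\sigma_*\epsilon_i,\qquad 1\le i\le n,$$ with $\epsilon_1,\dots,\epsilon_n$ i.i.d. $N(0,1)$. Let $r=\max_{1\le i\le n}|\pi^*(i)-i|$ and let $M\in\mathbb{R}^{n\times n}$ have entries $M_{ij}=\mathbb{I}(|i-j|\le r)$. Let $\widehat{\pi}$ (with permutation matrix $\widehat{\Pi}$) be the MAP estimator of $\pi^*$ under the prior $p(\pi)\propto\exp(\gamma\,\mathrm{tr}(\Pi^\top M))$, i.e., a minimizer over permutations $\pi$ of $[n]$ of $$\frac{1}{2\sigma_*^2}\sum_{i=1}^n\big(y_i-\mu_{\pi(i)}\big)^2-\gamma\,\mathrm{tr}(\Pi^\top M).$$ If $\gamma>\frac{2L}{\sigma_*}\big(\sqrt{\log n}+\sqrt{2}\,r\big)$, then with probability at least $1-\exp(-(\sqrt2-1)^2/2)-2/n$, the estimator satisfies $|\widehat{\pi}(i)-i|\le r$ for all $1\le i\le n$; moreover, on the same event, $\max_{1\le i\le n}|\mu_{\widehat{\pi}(i)}-\mu_{\pi^*(i)}|\le 2L\, r/n$.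
   Context: For a permutation $\pi$ of $[n]$, its permutation matrix $\Pi=(\pi_{ij})$ has $\pi_{ij}=1$ if $\pi(i)=j$ and $0$ otherwise; thus $\mathrm{tr}(\Pi^\top M)=\sum_{i}M_{i\pi(i)}$, which here equals the number of indices $i$ with $|\pi(i)-i|\le r$. $\mathbb{I}$ denotes the indicator function. *)

theory Defs
  imports "HOL-Probability.Probability"
begin

definition mu :: "(real \<Rightarrow> real) \<Rightarrow> nat \<Rightarrow> nat \<Rightarrow> real" where
  "mu f n i = f (real i / real n)"

definition bandM :: "nat \<Rightarrow> nat \<Rightarrow> nat \<Rightarrow> real" where
  "bandM r i j = (if \<bar>int i - int j\<bar> \<le> int r then 1 else 0)"

text \<open>tr(Pi^T M) = sum_i M_{i, pi(i)}\<close>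
definition trPM :: "nat \<Rightarrow> (nat \<Rightarrow> nat \<Rightarrow> real) \<Rightarrow> (nat \<Rightarrow> nat) \<Rightarrow> real" where
  "trPM n M p = (\<Sum>i\<in>{1..n}. M i (p i))"

definition max_disp :: "nat \<Rightarrow> (nat \<Rightarrow> nat) \<Rightarrow> nat" where
  "max_disp n p = Max ((\<lambda>i. nat \<bar>int (p i) - int i\<bar>) ` {1..n})"

definition map_obj :: "(real \<Rightarrow> real) \<Rightarrow> nat \<Rightarrow> real \<Rightarrow> real \<Rightarrow> (nat \<Rightarrow> nat \<Rightarrow> real)
    \<Rightarrow> (nat \<Rightarrow> real) \<Rightarrow> (nat \<Rightarrow> nat) \<Rightarrow> real" where
  "map_obj f n \<sigma> \<gamma> M y p =
     1 / (2 * \<sigma>^2) * (\<Sum>i\<in>{1..n}. (y i - mu f n (p i))^2) - \<gamma> * trPM n M p"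

definition is_MAP :: "(real \<Rightarrow> real) \<Rightarrow> nat \<Rightarrow> real \<Rightarrow> real \<Rightarrow> (nat \<Rightarrow> nat \<Rightarrow> real)
    \<Rightarrow> (nat \<Rightarrow> real) \<Rightarrow> (nat \<Rightarrow> nat) \<Rightarrow> bool" where
  "is_MAP f n \<sigma> \<gamma> M y p \<longleftrightarrow> p permutes {1..n} \<and>
     (\<forall>q. q permutes {1..n} \<longrightarrow> map_obj f n \<sigma> \<gamma> M y p \<le> map_obj f n \<sigma> \<gamma> M y q)"

definition noise :: "nat \<Rightarrow> (nat \<Rightarrow> real) measure" where
  "noise n = PiM {1..n} (\<lambda>_. density lborel std_normal_density)"

end

theory Submission
  imports Defs
begin


lemma mu_diff:
  assumes lip: "L-lipschitz_on {0..1} f" and n: "n \<ge> 1"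
    and i: "i \<in> {1..n}" and j: "j \<in> {1..n}"
  shows "\<bar>mu f n i - mu f n j\<bar> \<le> L * \<bar>real i - real j\<bar> / real n"
proof -
  have "real i / real n \<in> {0..1}" "real j / real n \<in> {0..1}" using i j n by auto
  from lipschitz_onD[OF lip this]
  have "\<bar>f (real i / real n) - f (real j / real n)\<bar> \<le> L * \<bar>real i / real n - real j / real n\<bar>"
    by (simp add: dist_real_def)
  also have "\<bar>real i / real n - real j / real n\<bar> = \<bar>real i - real j\<bar> / real n"
    using n by (simp add: diff_divide_distrib[symmetric])
  finally show ?thesis by (simp add: mu_def)
qed

lemma abs_le_amgm: "\<bar>x::real\<bar> \<le> (sqrt 2 + x^2 / sqrt 2) / 2"
proof -
  have "0 \<le> (\<bar>x\<bar> - sqrt 2)^2" by simp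
  hence "2 * sqrt 2 * \<bar>x\<bar> \<le> x^2 + 2"
    by (simp add: power2_eq_square algebra_simps) 
  thus ?thesis by (simp add: field_simps)
qed

lemma disp_ps:
  assumes "i \<in> {1..n}"
  shows "\<bar>int (p i) - int i\<bar> \<le> int (max_disp n p)"
proof -
  have "nat \<bar>int (p i) - int i\<bar> \<le> max_disp n p"
    unfolding max_disp_def using assms by (intro Max_ge) auto
  thus ?thesis by linarith
qed

lemma trPM_eq:
  "trPM n (bandM r) p = real n - real (card {i\<in>{1..n}. \<not> \<bar>int (p i) - int i\<bar> \<le> int r})"
proof -
  let ?O = "{i\<in>{1..n}. \<not> \<bar>int (p i) - int i\<bar> \<le> int r}"
  let ?I = "{i\<in>{1..n}. \<bar>int (p i) - int i\<bar> \<le> int r}"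
  have "trPM n (bandM r) p = (\<Sum>i\<in>{1..n}. if \<bar>int i - int (p i)\<bar> \<le> int r then 1 else 0)"
    unfolding trPM_def bandM_def by simp
  also have "\<dots> = real (card ?I)"
    by (simp add: sum.If_cases abs_minus_commute Int_def conj_commute)
  also have "card ?I + card ?O = n"
  proof -
    have "?I \<union> ?O = {1..n}" by auto
    moreover have "card (?I \<union> ?O) = card ?I + card ?O" by (intro card_Un_disjoint) auto
    ultimately show ?thesis by simp
  qed
  hence "real (card ?I) = real n - real (card ?O)" by linarith
  finally show ?thesis .
qed

lemma det_main:
  fixes f :: "real \<Rightarrow> real" and L \<sigma> \<gamma> :: real and n :: nat and ps ph :: "nat \<Rightarrow> nat"
    and \<epsilon> :: "nat \<Rightarrow> real"
  assumes lip: "L-lipschitz_on {0..1} f"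
    and n: "n \<ge> 1"
    and ps: "ps permutes {1..n}"
    and sig: "\<sigma> > 0"
    and gam: "\<gamma> > 2 * L / \<sigma> * (sqrt (ln (real n)) + sqrt 2 * real (max_disp n ps))"
    and epsmax: "\<forall>i\<in>{1..n}. \<bar>\<epsilon> i\<bar> \<le> 2 * sqrt (ln (real n))"
    and epssq: "(\<Sum>i\<in>{1..n}. (\<epsilon> i)^2) \<le> 2 * real n"
    and map: "is_MAP f n \<sigma> \<gamma> (bandM (max_disp n ps)) (\<lambda>i. mu f n (ps i) + \<sigma> * \<epsilon> i) ph"
  shows "(\<forall>i\<in>{1..n}. \<bar>int (ph i) - int i\<bar> \<le> int (max_disp n ps)) \<and>
          Max ((\<lambda>i. \<bar>mu f n (ph i) - mu f n (ps i)\<bar>) ` {1..n})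
             \<le> 2 * L * real (max_disp n ps) / real n"
proof -
  define r where "r = max_disp n ps"
  define y where "y = (\<lambda>i. mu f n (ps i) + \<sigma> * \<epsilon> i)"
  define t where "t = 2 * sqrt (ln (real n))"
  define d where "d = (\<lambda>i. mu f n (ps i) - mu f n (ph i))"
  define Ob where "Ob = {i\<in>{1..n}. \<not> \<bar>int (ph i) - int i\<bar> \<le> int r}"
  define k where "k = card Ob"
  have L0: "0 \<le> L" using lipschitz_on_nonneg[OF lip] .
  have ph: "ph permutes {1..n}" and opt: "map_obj f n \<sigma> \<gamma> (bandM r) y ph \<le> map_obj f n \<sigma> \<gamma> (bandM r) y ps"
    using map ps unfolding is_MAP_def r_def y_def by auto
  have phin: "ph i \<in> {1..n}" if "i \<in> {1..n}" for i using permutes_in_image[OF ph] that by simp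
  have psin: "ps i \<in> {1..n}" if "i \<in> {1..n}" for i using permutes_in_image[OF ps] that by simp
  have dps: "\<bar>int (ps i) - int i\<bar> \<le> int r" if "i \<in> {1..n}" for i
    using disp_ps[OF that] unfolding r_def .
  have trps: "trPM n (bandM r) ps = real n"
    using trPM_eq[of n r ps] dps by simp
  have trph: "trPM n (bandM r) ph = real n - real k"
    using trPM_eq[of n r ph] unfolding k_def Ob_def by simp
  have dbound: "\<bar>d i\<bar> \<le> L * \<bar>real (ps i) - real (ph i)\<bar> / real n" if "i \<in> {1..n}" for i
    unfolding d_def by (rule mu_diff[OF lip n psin[OF that] phin[OF that]])
  have part1: "\<forall>i\<in>{1..n}. \<bar>int (ph i) - int i\<bar> \<le> int r"
  proof (rule ccontr)
    assume "\<not> ?thesis"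
    then have "Ob \<noteq> {}" unfolding Ob_def by auto
    hence k1: "k \<ge> 1" unfolding k_def Ob_def by (simp add: Suc_le_eq card_gt_0_iff)
    have yps: "y i - mu f n (ps i) = \<sigma> * \<epsilon> i" for i unfolding y_def by simp
    have yph: "y i - mu f n (ph i) = \<sigma> * \<epsilon> i + d i" for i unfolding y_def d_def by simp
    have "1 / (2 * \<sigma>^2) * (\<Sum>i\<in>{1..n}. (\<sigma> * \<epsilon> i + d i)^2) - \<gamma> * (real n - real k)
          \<le> 1 / (2 * \<sigma>^2) * (\<Sum>i\<in>{1..n}. (\<sigma> * \<epsilon> i)^2) - \<gamma> * real n"
      using opt unfolding map_obj_def trps trph yps yph .
    hence A: "\<gamma> * real k \<le> 1 / (2 * \<sigma>^2) * ((\<Sum>i\<in>{1..n}. (\<sigma> * \<epsilon> i)^2) - (\<Sum>i\<in>{1..n}. (\<sigma> * \<epsilon> i + d i)^2))"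
      by (simp add: algebra_simps)
    have B: "(\<Sum>i\<in>{1..n}. (\<sigma> * \<epsilon> i)^2) - (\<Sum>i\<in>{1..n}. (\<sigma> * \<epsilon> i + d i)^2)
        \<le> 2 * \<sigma> * (\<Sum>i\<in>{1..n}. \<bar>\<epsilon> i\<bar> * \<bar>d i\<bar>)"
    proof -
      have "(\<Sum>i\<in>{1..n}. (\<sigma> * \<epsilon> i)^2) - (\<Sum>i\<in>{1..n}. (\<sigma> * \<epsilon> i + d i)^2)
         = (\<Sum>i\<in>{1..n}. (\<sigma> * \<epsilon> i)^2 - (\<sigma> * \<epsilon> i + d i)^2)"
        by (simp add: sum_subtractf)
      also have "\<dots> \<le> (\<Sum>i\<in>{1..n}. 2 * \<sigma> * (\<bar>\<epsilon> i\<bar> * \<bar>d i\<bar>))"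
      proof (rule sum_mono)
        fix i
        have "- (\<epsilon> i * d i) \<le> \<bar>\<epsilon> i\<bar> * \<bar>d i\<bar>"
          by (metis abs_ge_minus_self abs_mult)
        hence "2 * \<sigma> * (- (\<epsilon> i * d i)) \<le> 2 * \<sigma> * (\<bar>\<epsilon> i\<bar> * \<bar>d i\<bar>)"
          using sig by (intro mult_left_mono) auto
        moreover have "0 \<le> d i * d i" by simp
        moreover have "(\<sigma> * \<epsilon> i)^2 - (\<sigma> * \<epsilon> i + d i)^2 = 2 * \<sigma> * (- (\<epsilon> i * d i)) - d i * d i"
          by (simp add: power2_eq_square algebra_simps)
        ultimately show "(\<sigma> * \<epsilon> i)^2 - (\<sigma> * \<epsilon> i + d i)^2 \<le> 2 * \<sigma> * (\<bar>\<epsilon> i\<bar> * \<bar>d i\<bar>)"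
          by linarith
      qed
      also have "\<dots> = 2 * \<sigma> * (\<Sum>i\<in>{1..n}. \<bar>\<epsilon> i\<bar> * \<bar>d i\<bar>)"
        by (simp add: sum_distrib_left)
      finally show ?thesis .
    qed
    have C: "(\<Sum>i\<in>{1..n}. \<bar>\<epsilon> i\<bar> * \<bar>d i\<bar>) \<le> real k * (L * t) + 2 * L * real r / real n * (\<Sum>i\<in>{1..n}. \<bar>\<epsilon> i\<bar>)"
    proof -
      have "(\<Sum>i\<in>{1..n}. \<bar>\<epsilon> i\<bar> * \<bar>d i\<bar>) \<le> (\<Sum>i\<in>{1..n}. (if i \<in> Ob then L * t else 0) + 2 * L * real r / real n * \<bar>\<epsilon> i\<bar>)"
      proof (rule sum_mono)
        fix i assume i: "i \<in> {1..n}"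
        have e0: "0 \<le> \<bar>\<epsilon> i\<bar>" by simp
        show "\<bar>\<epsilon> i\<bar> * \<bar>d i\<bar> \<le> (if i \<in> Ob then L * t else 0) + 2 * L * real r / real n * \<bar>\<epsilon> i\<bar>"
        proof (cases "i \<in> Ob")
          case True
          have "\<bar>real (ps i) - real (ph i)\<bar> \<le> real n" using psin[OF i] phin[OF i] by auto
          hence "L * \<bar>real (ps i) - real (ph i)\<bar> / real n \<le> L" using n L0
            by (simp add: divide_le_eq mult_left_mono)
          hence "\<bar>d i\<bar> \<le> L" using dbound[OF i] by linarith
          moreover have "\<bar>\<epsilon> i\<bar> \<le> t" using epsmax i unfolding t_def by auto
          ultimately have "\<bar>\<epsilon> i\<bar> * \<bar>d i\<bar> \<le> t * L" using L0
            by (intro mult_mono) auto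
          moreover have "0 \<le> 2 * L * real r / real n * \<bar>\<epsilon> i\<bar>" using L0 by simp
          ultimately show ?thesis using True by (simp add: mult.commute)
        next
          case False
          hence "\<bar>int (ph i) - int i\<bar> \<le> int r" using i unfolding Ob_def by auto
          with dps[OF i] have "\<bar>real (ps i) - real (ph i)\<bar> \<le> 2 * real r" by linarith
          hence "L * \<bar>real (ps i) - real (ph i)\<bar> / real n \<le> L * (2 * real r) / real n" using n L0
            by (intro divide_right_mono mult_left_mono) auto
          hence "\<bar>d i\<bar> \<le> 2 * L * real r / real n" using dbound[OF i] by (simp add: mult.assoc mult.left_commute)
          hence "\<bar>\<epsilon> i\<bar> * \<bar>d i\<bar> \<le> \<bar>\<epsilon> i\<bar> * (2 * L * real r / real n)"
            by (intro mult_left_mono) auto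
          thus ?thesis using False by (simp add: mult.commute)
        qed
      qed
      also have "\<dots> = real k * (L * t) + 2 * L * real r / real n * (\<Sum>i\<in>{1..n}. \<bar>\<epsilon> i\<bar>)"
      proof -
        have "Ob \<subseteq> {1..n}" unfolding Ob_def by auto
        hence "(\<Sum>i\<in>{1..n}. (if i \<in> Ob then L * t else 0)) = real k * (L * t)"
          unfolding k_def by (simp add: sum.If_cases Int_absorb1)
        thus ?thesis by (simp add: sum.distrib sum_distrib_left)
      qed
      finally show ?thesis .
    qed
    have D: "(\<Sum>i\<in>{1..n}. \<bar>\<epsilon> i\<bar>) \<le> sqrt 2 * real n"
    proof -
      have "(\<Sum>i\<in>{1..n}. \<bar>\<epsilon> i\<bar>) \<le> (\<Sum>i\<in>{1..n}. (sqrt 2 + (\<epsilon> i)^2 / sqrt 2) / 2)"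
        by (intro sum_mono abs_le_amgm)
      also have "\<dots> = (sqrt 2 * real n + (\<Sum>i\<in>{1..n}. (\<epsilon> i)^2) / sqrt 2) / 2"
        by (simp add: sum_divide_distrib[symmetric] sum.distrib)
      also have "\<dots> \<le> (sqrt 2 * real n + 2 * real n / sqrt 2) / 2"
        using epssq by (intro divide_right_mono add_left_mono) auto
      also have "2 * real n / sqrt 2 = sqrt 2 * real n"
        by (metis nonzero_mult_div_cancel_left real_div_sqrt times_divide_eq_left zero_le_numeral zero_neq_numeral)
      finally show ?thesis by (simp add: mult.commute)
    qed
    have r0: "0 \<le> 2 * L * real r / real n" using L0 by simp
    have E: "(\<Sum>i\<in>{1..n}. \<bar>\<epsilon> i\<bar> * \<bar>d i\<bar>) \<le> real k * (L * t) + 2 * L * real r * sqrt 2"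
    proof -
      have "2 * L * real r / real n * (\<Sum>i\<in>{1..n}. \<bar>\<epsilon> i\<bar>) \<le> 2 * L * real r / real n * (sqrt 2 * real n)"
        using D r0 by (rule mult_left_mono)
      also have "\<dots> = 2 * L * real r * sqrt 2" using n by simp
      finally show ?thesis using C by linarith
    qed
    have "\<gamma> * real k \<le> 1 / (2 * \<sigma>^2) * (2 * \<sigma> * (real k * (L * t) + 2 * L * real r * sqrt 2))"
    proof -
      have "1 / (2 * \<sigma>^2) * ((\<Sum>i\<in>{1..n}. (\<sigma> * \<epsilon> i)^2) - (\<Sum>i\<in>{1..n}. (\<sigma> * \<epsilon> i + d i)^2))
           \<le> 1 / (2 * \<sigma>^2) * (2 * \<sigma> * (real k * (L * t) + 2 * L * real r * sqrt 2))"
      proof (rule mult_left_mono)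
        have "2 * \<sigma> * (\<Sum>i\<in>{1..n}. \<bar>\<epsilon> i\<bar> * \<bar>d i\<bar>) \<le> 2 * \<sigma> * (real k * (L * t) + 2 * L * real r * sqrt 2)"
          using E sig by (intro mult_left_mono) auto
        thus "(\<Sum>i\<in>{1..n}. (\<sigma> * \<epsilon> i)^2) - (\<Sum>i\<in>{1..n}. (\<sigma> * \<epsilon> i + d i)^2) \<le> 2 * \<sigma> * (real k * (L * t) + 2 * L * real r * sqrt 2)"
          using B by linarith
      qed simp
      thus ?thesis using A by linarith
    qed
    also have "\<dots> = (real k * (L * t) + 2 * L * real r * sqrt 2) / \<sigma>"
      using sig by (simp add: power2_eq_square field_simps)
    also have "\<dots> \<le> real k * (2 * L / \<sigma> * (sqrt (ln (real n)) + sqrt 2 * real r))"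
    proof -
      have "2 * L * real r * sqrt 2 \<le> real k * (2 * L * real r * sqrt 2)"
      proof -
        have "0 \<le> 2 * L * real r * sqrt 2" using L0 by simp
        moreover have "1 \<le> real k" using k1 by simp
        ultimately show ?thesis using mult_right_mono[of 1 "real k" "2 * L * real r * sqrt 2"] by simp
      qed
      hence "real k * (L * t) + 2 * L * real r * sqrt 2 \<le> real k * (2 * L * (sqrt (ln (real n)) + sqrt 2 * real r))"
        unfolding t_def by (simp add: algebra_simps)
      hence "(real k * (L * t) + 2 * L * real r * sqrt 2) / \<sigma> \<le> real k * (2 * L * (sqrt (ln (real n)) + sqrt 2 * real r)) / \<sigma>"
        using sig by (intro divide_right_mono) auto
      also have "\<dots> = real k * (2 * L / \<sigma> * (sqrt (ln (real n)) + sqrt 2 * real r))"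
        by simp
      finally show ?thesis .
    qed
    also have "\<dots> < real k * \<gamma>"
      using gam k1 unfolding r_def by (intro mult_strict_left_mono) auto
    finally show False by simp
  qed
  have part2: "Max ((\<lambda>i. \<bar>mu f n (ph i) - mu f n (ps i)\<bar>) ` {1..n}) \<le> 2 * L * real r / real n"
  proof (subst Max_le_iff)
    show "finite ((\<lambda>i. \<bar>mu f n (ph i) - mu f n (ps i)\<bar>) ` {1..n})" by simp
    show "(\<lambda>i. \<bar>mu f n (ph i) - mu f n (ps i)\<bar>) ` {1..n} \<noteq> {}" using n by simp
    show "\<forall>a\<in>(\<lambda>i. \<bar>mu f n (ph i) - mu f n (ps i)\<bar>) ` {1..n}. a \<le> 2 * L * real r / real n"
    proof
      fix a assume "a \<in> (\<lambda>i. \<bar>mu f n (ph i) - mu f n (ps i)\<bar>) ` {1..n}"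
      then obtain i where i: "i \<in> {1..n}" and a: "a = \<bar>mu f n (ph i) - mu f n (ps i)\<bar>" by auto
      have "\<bar>int (ph i) - int i\<bar> \<le> int r" using part1 i by auto
      with dps[OF i] have "\<bar>real (ps i) - real (ph i)\<bar> \<le> 2 * real r" by linarith
      hence "L * \<bar>real (ps i) - real (ph i)\<bar> / real n \<le> L * (2 * real r) / real n" using n L0
        by (intro divide_right_mono mult_left_mono) auto
      moreover have "L * (2 * real r) / real n = 2 * L * real r / real n" by simp
      ultimately show "a \<le> 2 * L * real r / real n" using dbound[OF i] unfolding a d_def
        by (simp add: abs_minus_commute)
    qed
  qed
  show ?thesis using part1 part2 unfolding r_def by simp
qed



abbreviation "NN \<equiv> density lborel std_normal_density"

lemma NN_prob: "prob_space NN" by (rule prob_space_normal_density) simp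

lemma sets_NN[measurable_cong]: "sets NN = sets borel" by simp

lemma mgf_eq: "std_normal_density x * exp (t * x) = exp (t^2 / 2) * normal_density t 1 x"
proof -
  have e: "- (x^2) / 2 + t * x = t^2 / 2 + (- ((x - t)^2) / (2 * 1^2))"
    by (simp add: power2_eq_square field_simps)
  have "std_normal_density x * exp (t * x) = (1 / sqrt (2 * pi)) * exp (- (x^2) / 2 + t * x)"
    unfolding std_normal_density_def by (simp add: exp_add[symmetric])
  also have "\<dots> = exp (t^2 / 2) * normal_density t 1 x"
    unfolding e exp_add normal_density_def by simp
  finally show ?thesis .
qed

lemma mgf_integrable: "integrable NN (\<lambda>x. exp (t * x))"
  by (subst integrable_density) (auto simp: mgf_eq)

lemma mgf_integral: "(\<integral>x. exp (t * x) \<partial>NN) = exp (t^2 / 2)"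
  by (subst integral_density) (auto simp: mgf_eq)

lemma tail_NN:
  assumes t: "0 \<le> t"
  shows "measure NN {x\<in>space NN. t \<le> \<bar>x\<bar>} \<le> 2 * exp (- (t^2 / 2))"
proof -
  let ?u = "\<lambda>x. exp (t * x) + exp ((- t) * x)"
  have int: "integrable NN ?u" using mgf_integrable[of t] mgf_integrable[of "-t"] by auto
  have "measure NN {x\<in>space NN. t \<le> \<bar>x\<bar>} \<le> measure NN {x\<in>space NN. exp (t * t) \<le> ?u x}"
  proof (rule finite_measure.finite_measure_mono)
    show "finite_measure NN" using NN_prob unfolding prob_space_def by blast
    show "{x \<in> space NN. exp (t * t) \<le> ?u x} \<in> sets NN" by measurable
    show "{x \<in> space NN. t \<le> \<bar>x\<bar>} \<subseteq> {x \<in> space NN. exp (t * t) \<le> ?u x}"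
    proof safe
      fix x assume "t \<le> \<bar>x\<bar>"
      hence "t * t \<le> t * \<bar>x\<bar>" using t by (intro mult_left_mono) auto
      hence "exp (t * t) \<le> exp (t * \<bar>x\<bar>)" by simp
      moreover have "exp (t * \<bar>x\<bar>) \<le> ?u x"
        by (cases "0 \<le> x") (auto simp: add_increasing add_increasing2)
      ultimately show "exp (t * t) \<le> ?u x" by linarith
    qed
  qed
  also have "\<dots> \<le> (\<integral>x. ?u x \<partial>NN) / exp (t * t)"
    by (rule integral_Markov_inequality_measure[OF int, where A="space NN"]) auto
  also have "(\<integral>x. ?u x \<partial>NN) = 2 * exp (t^2/2)"
    using mgf_integrable[of t] mgf_integrable[of "-t"] mgf_integral[of t] mgf_integral[of "-t"]
    by simp
  also have "2 * exp (t^2/2) / exp (t * t) = 2 * exp (- (t^2 / 2))"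
  proof -
    have "t * t + - (t^2 / 2) = t^2 / 2" by (simp add: power2_eq_square)
    hence "exp (t * t) * exp (- (t^2 / 2)) = exp (t^2/2)" by (simp add: exp_add[symmetric])
    thus ?thesis by (simp add: field_simps)
  qed
  finally show ?thesis .
qed



lemma noise_prob: "prob_space (noise n)"
  unfolding noise_def by (rule prob_space_PiM) (rule NN_prob)

lemma comp_measN: "i \<in> {1..n} \<Longrightarrow> (\<lambda>\<omega>. \<omega> i) \<in> measurable (noise n) NN"
  unfolding noise_def by (rule measurable_component_singleton)

lemma meas_NN_eq: "measurable M NN = measurable M borel"
  by (rule measurable_cong_sets) simp_all

lemma comp_meas: "i \<in> {1..n} \<Longrightarrow> (\<lambda>\<omega>. \<omega> i) \<in> measurable (noise n) borel"
  using comp_measN meas_NN_eq by metis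

lemma comp_distr: "i \<in> {1..n} \<Longrightarrow> distr (noise n) NN (\<lambda>\<omega>. \<omega> i) = NN"
  unfolding noise_def by (rule distr_PiM_component) (auto intro: NN_prob)

lemma comp_tail:
  assumes i: "i \<in> {1..n}" and t: "0 \<le> t"
  shows "measure (noise n) {\<epsilon>\<in>space (noise n). t \<le> \<bar>\<epsilon> i\<bar>} \<le> 2 * exp (- (t^2 / 2))"
proof -
  have m: "(\<lambda>\<omega>. \<omega> i) \<in> measurable (noise n) NN"
    using comp_measN[OF i] .
  have "measure (noise n) {\<epsilon>\<in>space (noise n). t \<le> \<bar>\<epsilon> i\<bar>}
      = measure (distr (noise n) NN (\<lambda>\<omega>. \<omega> i)) {x\<in>space NN. t \<le> \<bar>x\<bar>}"
  proof -
    have A: "{x\<in>space NN. t \<le> \<bar>x\<bar>} \<in> sets NN" by simp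
    have "(\<lambda>\<omega>. \<omega> i) -` {x\<in>space NN. t \<le> \<bar>x\<bar>} \<inter> space (noise n) = {\<epsilon>\<in>space (noise n). t \<le> \<bar>\<epsilon> i\<bar>}"
      by auto
    thus ?thesis using measure_distr[OF m A] by simp
  qed
  also have "\<dots> = measure NN {x\<in>space NN. t \<le> \<bar>x\<bar>}" by (simp add: comp_distr[OF i])
  also have "\<dots> \<le> 2 * exp (- (t^2 / 2))" by (rule tail_NN[OF t])
  finally show ?thesis .
qed

lemma NN_sq: "integrable NN (\<lambda>x. x^2)" "(\<integral>x. x^2 \<partial>NN) = 1"
proof -
  show "integrable NN (\<lambda>x. x^2)"
    by (subst integrable_density) (auto intro: integrable_std_normal_moment)
  have "(\<integral>x. x^2 \<partial>NN) = (\<integral>x. std_normal_density x * x^(2*1) \<partial>lborel)"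
    by (subst integral_density) auto
  also have "\<dots> = 1" by (subst integral_std_normal_moment_even) simp
  finally show "(\<integral>x. x^2 \<partial>NN) = 1" .
qed

lemma comp_sq:
  assumes i: "i \<in> {1..n}"
  shows "integrable (noise n) (\<lambda>\<epsilon>. (\<epsilon> i)^2)" "(\<integral>\<epsilon>. (\<epsilon> i)^2 \<partial>noise n) = 1"
proof -
  have m: "(\<lambda>\<omega>. \<omega> i) \<in> measurable (noise n) NN"
    using comp_measN[OF i] .
  show "integrable (noise n) (\<lambda>\<epsilon>. (\<epsilon> i)^2)"
    using integrable_distr_eq[OF m, of "\<lambda>x. x^2"] NN_sq(1) by (simp add: comp_distr[OF i])
  show "(\<integral>\<epsilon>. (\<epsilon> i)^2 \<partial>noise n) = 1"
    using integral_distr[OF m, of "\<lambda>x. x^2"] NN_sq(2) by (simp add: comp_distr[OF i])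
qed

lemma sum_sq_markov:
  assumes n: "n \<ge> 1"
  shows "measure (noise n) {\<epsilon>\<in>space (noise n). 2 * real n \<le> (\<Sum>i\<in>{1..n}. (\<epsilon> i)^2)} \<le> 1/2"
proof -
  have int: "integrable (noise n) (\<lambda>\<epsilon>. \<Sum>i\<in>{1..n}. (\<epsilon> i)^2)"
    using Bochner_Integration.integrable_sum[where I="{1..n}" and M="noise n" and f="\<lambda>i \<epsilon>. (\<epsilon> i)^2", OF comp_sq(1)] by simp
  have "measure (noise n) {\<epsilon>\<in>space (noise n). 2 * real n \<le> (\<Sum>i\<in>{1..n}. (\<epsilon> i)^2)}
      \<le> (\<integral>\<epsilon>. (\<Sum>i\<in>{1..n}. (\<epsilon> i)^2) \<partial>noise n) / (2 * real n)"
    by (rule integral_Markov_inequality_measure[OF int, where A="space (noise n)"]) (use n in \<open>auto intro!: AE_I2 sum_nonneg\<close>)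
  also have "(\<integral>\<epsilon>. (\<Sum>i\<in>{1..n}. (\<epsilon> i)^2) \<partial>noise n) = real n"
    using comp_sq by (subst Bochner_Integration.integral_sum) auto
  finally show ?thesis using n by simp
qed



lemma F_meas:
  assumes "n \<ge> 1"
  shows "(\<lambda>\<epsilon>. map_obj f n \<sigma> \<gamma> M (\<lambda>i. mu f n (ps i) + \<sigma> * \<epsilon> i) p) \<in> borel_measurable (noise n)"
proof -
  have "(\<lambda>\<epsilon>. \<Sum>i\<in>{1..n}. (mu f n (ps i) + \<sigma> * \<epsilon> i - mu f n (p i))^2) \<in> borel_measurable (noise n)"
  proof (rule borel_measurable_sum)
    fix i assume i: "i \<in> {1..n}"
    note comp_meas[OF i, measurable]
    show "(\<lambda>\<epsilon>. (mu f n (ps i) + \<sigma> * \<epsilon> i - mu f n (p i))^2) \<in> borel_measurable (noise n)"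
      by measurable
  qed
  thus ?thesis unfolding map_obj_def by measurable
qed

theorem proposition2:
  fixes f :: "real \<Rightarrow> real" and L \<sigma> \<gamma> :: real and n :: nat and ps :: "nat \<Rightarrow> nat"
  assumes "L-lipschitz_on {0..1} f"
    and "n \<ge> 1"
    and "ps permutes {1..n}"
    and "\<sigma> > 0"
    and "\<gamma> > 2 * L / \<sigma> * (sqrt (ln (real n)) + sqrt 2 * real (max_disp n ps))"
  shows "measure (noise n)
     {\<epsilon> \<in> space (noise n).
        \<forall>ph. is_MAP f n \<sigma> \<gamma> (bandM (max_disp n ps))
                (\<lambda>i. mu f n (ps i) + \<sigma> * \<epsilon> i) ph \<longrightarrow>
          (\<forall>i\<in>{1..n}. \<bar>int (ph i) - int i\<bar> \<le> int (max_disp n ps)) \<and>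
          Max ((\<lambda>i. \<bar>mu f n (ph i) - mu f n (ps i)\<bar>) ` {1..n})
             \<le> 2 * L * real (max_disp n ps) / real n}
   \<ge> 1 - exp (- ((sqrt 2 - 1)^2 / 2)) - 2 / real n"
proof -
  note lip = assms(1) and n = assms(2) and ps = assms(3) and sig = assms(4) and gam = assms(5)
  define P where "P = noise n"
  define r where "r = max_disp n ps"
  define C where "C = (\<lambda>ph::nat\<Rightarrow>nat. (\<forall>i\<in>{1..n}. \<bar>int (ph i) - int i\<bar> \<le> int r) \<and>
          Max ((\<lambda>i. \<bar>mu f n (ph i) - mu f n (ps i)\<bar>) ` {1..n}) \<le> 2 * L * real r / real n)"
  define F where "F = (\<lambda>\<epsilon> p. map_obj f n \<sigma> \<gamma> (bandM r) (\<lambda>i. mu f n (ps i) + \<sigma> * \<epsilon> i) p)"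
  define Perms where "Perms = {p. p permutes {1..n}}"
  define S where "S = {\<epsilon> \<in> space P. \<forall>ph. is_MAP f n \<sigma> \<gamma> (bandM r) (\<lambda>i. mu f n (ps i) + \<sigma> * \<epsilon> i) ph \<longrightarrow> C ph}"
  define t where "t = 2 * sqrt (ln (real n))"
  define B1 where "B1 = (\<Union>i\<in>{1..n}. {\<epsilon>\<in>space P. t \<le> \<bar>\<epsilon> i\<bar>})"
  define B2 where "B2 = {\<epsilon>\<in>space P. 2 * real n \<le> (\<Sum>i\<in>{1..n}. (\<epsilon> i)^2)}"
  interpret prob_space P unfolding P_def by (rule noise_prob)
  have finP: "finite Perms" unfolding Perms_def by (rule finite_permutations) simp
  have S_eq: "S = {\<epsilon> \<in> space P. \<forall>ph\<in>Perms. (\<forall>q\<in>Perms. F \<epsilon> ph \<le> F \<epsilon> q) \<longrightarrow> C ph}"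
    unfolding S_def is_MAP_def Perms_def F_def by auto
  have Fm: "(\<lambda>\<epsilon>. F \<epsilon> p) \<in> borel_measurable P" for p
    unfolding F_def P_def by (rule F_meas[OF n])
  have S_sets: "S \<in> sets P"
    unfolding S_eq
  proof (rule sets.sets_Collect_finite_All[OF _ finP])
    fix ph assume "ph \<in> Perms"
    show "{\<epsilon> \<in> space P. (\<forall>q\<in>Perms. F \<epsilon> ph \<le> F \<epsilon> q) \<longrightarrow> C ph} \<in> sets P"
    proof (rule sets.sets_Collect_imp)
      show "{x \<in> space P. C ph} \<in> sets P" by (rule sets.sets_Collect_const)
      show "{x \<in> space P. \<forall>q\<in>Perms. F x ph \<le> F x q} \<in> sets P"
      proof (rule sets.sets_Collect_finite_All[OF _ finP])
        fix q
        show "{x \<in> space P. F x ph \<le> F x q} \<in> sets P"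
          using Fm[of ph] Fm[of q] by measurable
      qed
    qed
  qed
  have t0: "0 \<le> t" unfolding t_def using n by simp
  have B1_sets: "B1 \<in> sets P" unfolding B1_def
    using comp_meas unfolding P_def by (intro sets.finite_UN) auto
  have B2_sets: "B2 \<in> sets P" unfolding B2_def P_def
  proof (intro borel_measurable_le borel_measurable_sum)
    fix i assume i: "i \<in> {1..n}"
    note comp_meas[OF i, measurable]
    show "(\<lambda>x. (x i)^2) \<in> borel_measurable (noise n)" by measurable
  qed simp
  have mB1: "measure P B1 \<le> 2 / real n"
  proof -
    have "measure P B1 \<le> (\<Sum>i\<in>{1..n}. measure P {\<epsilon>\<in>space P. t \<le> \<bar>\<epsilon> i\<bar>})"
      unfolding B1_def using comp_meas unfolding P_def by (intro measure_UNION_le) auto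
    also have "\<dots> \<le> (\<Sum>i\<in>{1..n}. 2 * exp (- (t^2 / 2)))"
      unfolding P_def by (intro sum_mono comp_tail t0) auto
    also have "\<dots> = real n * (2 * exp (- (t^2 / 2)))" by simp
    also have "exp (- (t^2 / 2)) = 1 / (real n)^2"
    proof -
      have "t^2 / 2 = 2 * ln (real n)" unfolding t_def using n by (simp add: power_mult_distrib)
      hence "exp (- (t^2 / 2)) = exp (ln (real n) * (- 2))" by simp
      also have "\<dots> = real n powr (-2)" unfolding powr_def using n by simp
      also have "\<dots> = 1 / (real n)^2" using n by (simp add: powr_minus powr_realpow divide_inverse)
      finally show ?thesis .
    qed
    also have "real n * (2 * (1 / (real n)^2)) = 2 / real n" using n by (simp add: power2_eq_square)
    finally show ?thesis .
  qed
  have mB2: "measure P B2 \<le> 1/2" unfolding B2_def P_def by (rule sum_sq_markov[OF n])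
  have G_sub: "space P - (B1 \<union> B2) \<subseteq> S"
  proof
    fix \<epsilon> assume e: "\<epsilon> \<in> space P - (B1 \<union> B2)"
    have em: "\<forall>i\<in>{1..n}. \<bar>\<epsilon> i\<bar> \<le> 2 * sqrt (ln (real n))"
      using e unfolding B1_def t_def by force
    have es: "(\<Sum>i\<in>{1..n}. (\<epsilon> i)^2) \<le> 2 * real n"
      using e unfolding B2_def by auto
    show "\<epsilon> \<in> S" unfolding S_def C_def r_def
      using e det_main[OF lip n ps sig gam em es] by auto
  qed
  have eq1: "measure P (space P - (B1 \<union> B2)) = 1 - measure P (B1 \<union> B2)"
    using B1_sets B2_sets by (simp add: prob_compl)
  have le1: "measure P (B1 \<union> B2) \<le> measure P B1 + measure P B2"
    using B1_sets B2_sets by (rule measure_Un_le)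
  have "measure P (space P - (B1 \<union> B2)) \<ge> 1 - 2 / real n - 1/2"
    using mB1 mB2 eq1 le1 by linarith
  moreover have "measure P (space P - (B1 \<union> B2)) \<le> measure P S"
    using G_sub S_sets by (rule finite_measure_mono)
  moreover have "exp (- ((sqrt 2 - 1)^2 / 2)) \<ge> 1/2"
  proof -
    have a: "0 \<le> sqrt 2 - 1" "sqrt 2 - 1 \<le> 1"
      using real_sqrt_le_mono[of 1 2] real_sqrt_le_mono[of 2 4] by auto
    hence "(sqrt 2 - 1)^2 \<le> 1" by (simp add: power_le_one)
    hence "1 - (sqrt 2 - 1)^2 / 2 \<ge> 1/2" by simp
    moreover have "1 + (- ((sqrt 2 - 1)^2 / 2)) \<le> exp (- ((sqrt 2 - 1)^2 / 2))"
      by (rule exp_ge_add_one_self)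
    ultimately show ?thesis by linarith
  qed
  ultimately have "measure P S \<ge> 1 - exp (- ((sqrt 2 - 1)^2 / 2)) - 2 / real n" by linarith
  thus ?thesis unfolding S_def P_def C_def r_def by simp
qed


end
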